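(* Let $\mathbf{E}=(E_1,\dots,E_K)$ be fixed with $\sum_{i=1}^K E_i\le E_{max}$, $0\le E_i< E_i^b+\eta_iP_Bh_i$ for all $i$, and $\sum_{j=1}^K\alpha_jE_j>0$. Then, among all $\boldsymbol{\tau}=(\tau_0,\dots,\tau_K)$ satisfying $\sum_{i=0}^K\tau_i\le 1$, $\tau_i\ge 0$ ($i=0,\dots,K$), and $E_i\le E_i^b+\eta_iP_Bh_i\tau_0$ ($i=1,\dots,K$), the objective $\sum_{i=1}^K R_i(E_i,\tau_i)$ is maximized by $$\tau_0^*=\min\left[\left(\max_i\frac{E_i-E_i^b}{\eta_iP_Bh_i}\right)^{+},\,1\right],\qquad \tau_i^*=\frac{\alpha_iE_i(1-\tau_0^* )}{\sum_{j=1}^K\alpha_jE_j},\quad i=1,\dots,K,$$ where $(x)^+=\max(0,x)$.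
   Context: Fix an integer $K\ge 1$ and positive constants $E_{max}$, $P_B$, and, for $i=1,\dots,K$, $E_i^b\ge 0$, $\eta_i\in(0,1)$, $h_i>0$, $g_i>0$, $\Gamma>0$, $\sigma^2>0$. Let $\alpha_i = g_i/(\Gamma\sigma^2)$. For $E_i\ge 0$, $\tau_i\ge 0$ define $R_i(E_i,\tau_i)=\tau_i\log_2\!\left(1+\alpha_i E_i/\tau_i\right)$ for $\tau_i>0$ and $R_i(E_i,0)=0$. *)

theory Defs
  imports Complex_Main
begin

definition rate :: "real \<Rightarrow> real \<Rightarrow> real \<Rightarrow> real" where
  "rate a E t = (if t > 0 then t * log 2 (1 + a * E / t) else 0)"

definition pos_part :: "real \<Rightarrow> real" where
  "pos_part x = max 0 x"

end

theory Submission
  imports Defs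
begin

lemma term_bound:
  fixes x t c :: real
  assumes x: "x \<ge> 0" and t: "t \<ge> 0" and c: "c > 0"
  shows "(if t > 0 then t * ln (1 + x / t) else 0) \<le> t * ln (1 + c) + (x - t * c) / (1 + c)"
proof (cases "t > 0")
  case True
  have p1: "1 + x / t > 0" using x True by (simp add: add_pos_nonneg)
  have "ln ((1 + x / t) / (1 + c)) \<le> (1 + x / t) / (1 + c) - 1"
    using p1 c by (intro ln_le_minus_one) simp
  hence "ln (1 + x / t) - ln (1 + c) \<le> (1 + x / t) / (1 + c) - 1"
    using p1 c by (simp add: ln_div)
  hence "t * (ln (1 + x / t) - ln (1 + c)) \<le> t * ((1 + x / t) / (1 + c) - 1)"
    using True by (intro mult_left_mono) auto
  also have "t * ((1 + x / t) / (1 + c) - 1) = (x - t * c) / (1 + c)"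
  proof -
    have e: "t * (1 + x / t) = t + x" using True by (simp add: field_simps)
    have "t * ((1 + x / t) / (1 + c) - 1) = t * (1 + x / t) / (1 + c) - t"
      by (simp add: algebra_simps)
    also have "\<dots> = (t + x) / (1 + c) - t" using e by simp
    also have "\<dots> = (x - t * c) / (1 + c)" using c by (simp add: field_simps)
    finally show ?thesis .
  qed
  finally show ?thesis using True by (simp add: algebra_simps)
next
  case False
  hence "t = 0" using t by simp
  then show ?thesis using x c by simp
qed

lemma ln_lower:
  fixes c :: real assumes c: "c > 0"
  shows "c / (1 + c) \<le> ln (1 + c)"
proof -
  have "ln (1 / (1 + c)) \<le> 1 / (1 + c) - 1" using c by (intro ln_le_minus_one) simp
  hence "- ln (1 + c) \<le> 1 / (1 + c) - 1" using c by (simp add: ln_div)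
  moreover have "1 / (1 + c) - 1 = - (c / (1 + c))" using c by (simp add: field_simps)
  ultimately show ?thesis by simp
qed

theorem theorem2:
  fixes K :: nat and Emax PB Gamma sigma2 :: real
    and Eb eta h g E :: "nat \<Rightarrow> real"
  assumes K: "K \<ge> 1"
    and Emax: "Emax > 0" and PB: "PB > 0" and Gamma: "Gamma > 0" and sigma2: "sigma2 > 0"
    and Eb: "\<forall>i\<in>{1..K}. Eb i \<ge> 0"
    and eta: "\<forall>i\<in>{1..K}. 0 < eta i \<and> eta i < 1"
    and h: "\<forall>i\<in>{1..K}. h i > 0"
    and g: "\<forall>i\<in>{1..K}. g i > 0"
    and Esum: "(\<Sum>i=1..K. E i) \<le> Emax"
    and Ebnd: "\<forall>i\<in>{1..K}. 0 \<le> E i \<and> E i < Eb i + eta i * PB * h i"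
    and Epos: "(\<Sum>j=1..K. g j / (Gamma * sigma2) * E j) > 0"
  defines "tau0s \<equiv> min (pos_part (Max ((\<lambda>i. (E i - Eb i) / (eta i * PB * h i)) ` {1..K}))) 1"
    and "feasible \<equiv> (\<lambda>tau :: nat \<Rightarrow> real. (\<Sum>i=0..K. tau i) \<le> 1 \<and> (\<forall>i\<in>{0..K}. tau i \<ge> 0)
           \<and> (\<forall>i\<in>{1..K}. E i \<le> Eb i + eta i * PB * h i * tau 0))"
    and "obj \<equiv> (\<lambda>tau :: nat \<Rightarrow> real. \<Sum>i=1..K. rate (g i / (Gamma * sigma2)) (E i) (tau i))"
  shows "let taus = (\<lambda>i. if i = 0 then tau0s else
           g i / (Gamma * sigma2) * E i * (1 - tau0s) / (\<Sum>j=1..K. g j / (Gamma * sigma2) * E j))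
         in feasible taus \<and> (\<forall>tau. feasible tau \<longrightarrow> obj tau \<le> obj taus)"
proof -
  define cc where "cc i = eta i * PB * h i" for i
  define M where "M = Max ((\<lambda>i. (E i - Eb i) / cc i) ` {1..K})"
  define x where "x i = g i / (Gamma * sigma2) * E i" for i
  define S where "S = (\<Sum>j=1..K. x j)"
  define T where "T = 1 - tau0s"
  have ccpos: "cc i > 0" if "i \<in> {1..K}" for i
    using eta h PB that unfolding cc_def by auto
  have xnn: "x i \<ge> 0" if "i \<in> {1..K}" for i
  proof -
    have "g i > 0" "E i \<ge> 0" using g Ebnd that by auto
    thus ?thesis unfolding x_def using Gamma sigma2 by simp
  qed
  have Spos: "S > 0" using Epos unfolding S_def x_def .
  have fin: "finite ((\<lambda>i. (E i - Eb i) / cc i) ` {1..K})" by simp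
  have ne: "(\<lambda>i. (E i - Eb i) / cc i) ` {1..K} \<noteq> {}" using K by auto
  have Mge: "(E i - Eb i) / cc i \<le> M" if "i \<in> {1..K}" for i
    unfolding M_def using fin that by (intro Max_ge) auto
  have Mlt: "M < 1"
  proof -
    obtain i where i: "i \<in> {1..K}" and Mi: "M = (E i - Eb i) / cc i"
      using Max_in[OF fin ne] unfolding M_def by auto
    have "E i < Eb i + eta i * PB * h i" using Ebnd i by blast
    hence "E i - Eb i < cc i" unfolding cc_def by linarith
    thus ?thesis using Mi ccpos[OF i] by (simp add: divide_less_eq)
  qed
  have t0: "tau0s = max 0 M" unfolding tau0s_def pos_part_def M_def[symmetric] cc_def[symmetric]
    using Mlt by simp
  have Tpos: "T > 0" using t0 Mlt unfolding T_def by simp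
  have tnn: "tau0s \<ge> 0" using t0 by simp
  define c where "c = S / T"
  have cpos: "c > 0" using Spos Tpos unfolding c_def by simp
  have ScT: "S = c * T" using Tpos unfolding c_def by simp
  define taus where "taus = (\<lambda>i. if i = 0 then tau0s else
           g i / (Gamma * sigma2) * E i * (1 - tau0s) / (\<Sum>j=1..K. g j / (Gamma * sigma2) * E j))"
  have taus_i: "taus i = x i / c" if "i \<ge> 1" for i
    using that Tpos Spos unfolding taus_def x_def[symmetric] S_def[symmetric] T_def[symmetric] c_def
    by (simp add: field_simps)
  have sum_taus: "(\<Sum>i=1..K. taus i) = T"
  proof -
    have "(\<Sum>i=1..K. taus i) = (\<Sum>i=1..K. x i / c)" by (rule sum.cong) (auto simp: taus_i)
    also have "\<dots> = S / c" unfolding S_def by (simp add: sum_divide_distrib)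
    also have "\<dots> = T" using ScT cpos by simp
    finally show ?thesis .
  qed
  have split0: "(\<Sum>i=0..K. f i) = f 0 + (\<Sum>i=1..K. f i)" for f :: "nat \<Rightarrow> real"
    by (simp add: sum.atLeast_Suc_atMost)
  have feas: "feasible taus"
    unfolding feasible_def
  proof (intro conjI ballI)
    show "(\<Sum>i=0..K. taus i) \<le> 1" using split0 sum_taus unfolding T_def
      by (simp add: taus_def)
  next
    fix i assume i: "i \<in> {0..K}"
    show "taus i \<ge> 0"
    proof (cases "i = 0")
      case True thus ?thesis using tnn by (simp add: taus_def)
    next
      case False
      hence "i \<in> {1..K}" using i by auto
      thus ?thesis using False taus_i xnn cpos by simp
    qed
  next
    fix i assume i: "i \<in> {1..K}"
    have "(E i - Eb i) / cc i \<le> tau0s" using Mge[OF i] t0 by simp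
    hence "E i - Eb i \<le> cc i * tau0s" using ccpos[OF i] by (simp add: divide_le_eq mult.commute)
    thus "E i \<le> Eb i + eta i * PB * h i * taus 0" by (simp add: taus_def cc_def)
  qed
  have ratei: "rate (g i / (Gamma * sigma2)) (E i) t =
      (if t > 0 then t * ln (1 + x i / t) else 0) / ln 2" for i t
    unfolding rate_def x_def log_def by (simp add: mult.assoc)
  have obj_taus: "obj taus = T * ln (1 + c) / ln 2"
  proof -
    have "obj taus = (\<Sum>i=1..K. x i / c * ln (1 + c) / ln 2)"
      unfolding obj_def
    proof (rule sum.cong)
      fix i assume i: "i \<in> {1..K}"
      show "rate (g i / (Gamma * sigma2)) (E i) (taus i) = x i / c * ln (1 + c) / ln 2"
      proof (cases "x i = 0")
        case True thus ?thesis using taus_i i by (simp add: ratei)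
      next
        case False
        hence xp: "x i > 0" using xnn[OF i] by simp
        have "x i / (x i / c) = c" using xp cpos by simp
        thus ?thesis using taus_i i xp cpos by (simp add: ratei)
      qed
    qed simp
    also have "\<dots> = S / c * ln (1 + c) / ln 2"
      unfolding S_def by (simp add: sum_divide_distrib sum_distrib_right)
    also have "\<dots> = T * ln (1 + c) / ln 2" using ScT cpos by simp
    finally show ?thesis .
  qed
  have opt: "obj tau \<le> obj taus" if ft: "feasible tau" for tau
  proof -
    have tnn': "\<forall>i\<in>{0..K}. tau i \<ge> 0" and sle: "(\<Sum>i=0..K. tau i) \<le> 1"
      and cons: "\<forall>i\<in>{1..K}. E i \<le> Eb i + eta i * PB * h i * tau 0"
      using ft unfolding feasible_def by auto
    have "M \<le> tau 0"
      unfolding M_def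
    proof (rule Max.boundedI[OF fin ne])
      fix y assume "y \<in> (\<lambda>i. (E i - Eb i) / cc i) ` {1..K}"
      then obtain i where i: "i \<in> {1..K}" and y: "y = (E i - Eb i) / cc i" by auto
      have "E i \<le> Eb i + eta i * PB * h i * tau 0" using cons i by blast
      hence "E i - Eb i \<le> cc i * tau 0" unfolding cc_def by (simp add: mult.commute)
      thus "y \<le> tau 0" using y ccpos[OF i] by (simp add: divide_le_eq mult.commute)
    qed
    hence "tau0s \<le> tau 0" using t0 tnn' by simp
    define s where "s = (\<Sum>i=1..K. tau i)"
    have sT: "s \<le> T" using sle split0[of tau] \<open>tau0s \<le> tau 0\<close> unfolding s_def T_def by simp
    have "obj tau = (\<Sum>i=1..K. (if tau i > 0 then tau i * ln (1 + x i / tau i) else 0) / ln 2)"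
      unfolding obj_def by (simp add: ratei)
    also have "\<dots> \<le> (\<Sum>i=1..K. (tau i * ln (1 + c) + (x i - tau i * c) / (1 + c)) / ln 2)"
      by (rule sum_mono, rule divide_right_mono, rule term_bound) (use xnn tnn' cpos in auto)
    also have "\<dots> = (s * ln (1 + c) + (S - s * c) / (1 + c)) / ln 2"
      unfolding s_def S_def
      by (simp add: sum_divide_distrib[symmetric] sum.distrib sum_distrib_right
          sum_subtractf add_divide_distrib diff_divide_distrib)
    also have "\<dots> \<le> T * ln (1 + c) / ln 2"
    proof (rule divide_right_mono)
      have "(S - s * c) / (1 + c) = (T - s) * (c / (1 + c))" using ScT cpos
        by (simp add: field_simps)
      also have "\<dots> \<le> (T - s) * ln (1 + c)"
        using sT ln_lower[OF cpos] by (intro mult_left_mono) auto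
      finally show "s * ln (1 + c) + (S - s * c) / (1 + c) \<le> T * ln (1 + c)"
        by (simp add: algebra_simps)
    qed simp
    finally show ?thesis using obj_taus by simp
  qed
  show ?thesis unfolding Let_def taus_def[symmetric] using feas opt by blast
qed

end
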